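(* Let $\{D_i\}_{i\in\mathbb{Z}}$ be non-negative integers and $d\in\mathbb{N}$. Set $D_i^d=\max\{D_i-d,0\}$ and, for $A\subset\mathbb{Z}$, $b(A)=\sum_{i\in A}D_i^d$. Then every finite cluster $C$ of claimed vertices on level $d$ satisfies $b(C)\le |C|-1$.
   Context: A vertex $i\in\mathbb{Z}$ is claimed on level $d$ iff $\sum_{k=i-m}^{i+m}D_k^d\ge m$ for some integer $m\ge1$. A cluster of claimed vertices is a set of consecutive vertices $\{i,\dots,i+n\}$ all of which are claimed, while $i-1$ and $i+n+1$ are not claimed. *)

theory Defs
  imports Main
begin

text \<open>Truncated degree D_i^d = max (D_i - d) 0 (nat subtraction truncates at 0).\<close>
definition Dlev :: "(int \<Rightarrow> nat) \<Rightarrow> nat \<Rightarrow> int \<Rightarrow> nat" where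
  "Dlev D d i = D i - d"

definition bsum :: "(int \<Rightarrow> nat) \<Rightarrow> nat \<Rightarrow> int set \<Rightarrow> nat" where
  "bsum D d A = (\<Sum>i\<in>A. Dlev D d i)"

definition claimed :: "(int \<Rightarrow> nat) \<Rightarrow> nat \<Rightarrow> int \<Rightarrow> bool" where
  "claimed D d i \<longleftrightarrow> (\<exists>m::nat. m \<ge> 1 \<and> (\<Sum>k\<in>{i - int m..i + int m}. Dlev D d k) \<ge> m)"

definition cluster :: "(int \<Rightarrow> nat) \<Rightarrow> nat \<Rightarrow> int set \<Rightarrow> bool" where
  "cluster D d C \<longleftrightarrow> (\<exists>i (n::nat). C = {i..i + int n} \<and> (\<forall>j\<in>C. claimed D d j)
      \<and> \<not> claimed D d (i - 1) \<and> \<not> claimed D d (i + int n + 1))"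

end

theory Submission
  imports Defs
begin

theorem lemma3p2:
  fixes D :: "int \<Rightarrow> nat" and d :: nat and C :: "int set"
  assumes "cluster D d C" and "finite C"
  shows "bsum D d C \<le> card C - 1"
proof -
  obtain i and n :: nat where C: "C = {i..i + int n}" and nc: "\<not> claimed D d (i - 1)"
    using assms(1) unfolding cluster_def by blast
  have lt: "(\<Sum>k\<in>{(i - 1) - int (n+1)..(i - 1) + int (n+1)}. Dlev D d k) < n + 1"
    using nc unfolding claimed_def by (metis le_add2 not_le)
  have sub: "C \<subseteq> {(i - 1) - int (n+1)..(i - 1) + int (n+1)}" using C by auto
  have "bsum D d C \<le> (\<Sum>k\<in>{(i - 1) - int (n+1)..(i - 1) + int (n+1)}. Dlev D d k)"
    unfolding bsum_def by (rule sum_mono2[OF _ sub]) auto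
  moreover have "card C = n + 1" using C by simp
  ultimately show ?thesis using lt by simp
qed

end
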